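(* Let $n \ge 2$, let $A$ be an $n\times n$ real matrix with $\mathrm{Tr}(AA^t)=n$, let $O$ be Haar distributed on $O(n,\mathbb{R})$, and for $t>0$ let $O'$ be obtained from $O$ by running the heat kernel on $O(n,\mathbb{R})$ for time $t$. Let $W = \mathrm{Tr}(AO)$ and $W' = \mathrm{Tr}(AO')$. Then \[ \mathbb{E}[(W'-W)^2 \mid O] = t\,[\,n - p_2(AO)\,] + R_t, \] where $p_2(AO) = \mathrm{Tr}((AO)^2)$ and $\sup|R_t| = O(t^2)$ as $t \to 0$.
   Context: The Laplacian on $O(n,\mathbb{R})$ is $\Delta = \frac12\sum_{1\le i<j\le n} X_{ij}^2$, where $X_{ij}$ is the left-invariant vector field $X_{ij}f(O) = \frac{d}{ds}\big|_{s=0} f(O e^{s(E_{ij}-E_{ji})})$ and $E_{ij}$ are the matrix units. The heat kernel $K(t,x,y)$ is the kernel of $e^{t\Delta}$ with respect to Haar measure: $(e^{t\Delta}\phi)(x) = \int K(t,x,y)\phi(y)\,dy$; it is nonnegative, symmetric and integrates to $1$ in $y$. "Running the heat kernel for time $t$" means $O'$ has conditional law $K(t,O,y)\,dy$ given $O$, so $\mathbb{E}[\phi(O')\mid O] = (e^{t\Delta}\phi)(O)$. *)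

theory Defs
  imports "HOL-Analysis.Analysis"
begin

text \<open>The one-parameter subgroup s |-> exp(s (E_ij - E_ji)) of O(n), written out
  explicitly (Givens rotation): identity except for entries
  (i,i) = (j,j) = cos s, (i,j) = sin s, (j,i) = - sin s   (for i \<noteq> j).\<close>
definition rot_exp :: "'n::finite \<Rightarrow> 'n \<Rightarrow> real \<Rightarrow> real^'n^'n" where
  "rot_exp i j s = (\<chi> a b.
      if a = b then (if a = i \<or> a = j then cos s else 1)
      else if a = i \<and> b = j then sin s
      else if a = j \<and> b = i then - sin s
      else 0)"

definition lie_X :: "'n::finite \<Rightarrow> 'n \<Rightarrow> (real^'n^'n \<Rightarrow> real) \<Rightarrow> real^'n^'n \<Rightarrow> real" where
  "lie_X i j f Q = deriv (\<lambda>s. f (Q ** rot_exp i j s)) 0"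

definition laplacian_On :: "(real^'n::{finite,linorder}^'n::{finite,linorder} \<Rightarrow> real) \<Rightarrow> real^'n::{finite,linorder}^'n::{finite,linorder} \<Rightarrow> real" where
  "laplacian_On f Q = (1/2) * (\<Sum>(i,j) \<in> {(i,j). i < j}. lie_X i j (lie_X i j f) Q)"

text \<open>u is a classical solution of the heat equation d/dt u = Delta u on O(n) with
  initial datum phi, i.e. u t = e^{t Delta} phi (classical solutions on the compact
  group are unique by the maximum principle).\<close>
definition heat_solution_On ::
  "(real^'n::{finite,linorder}^'n::{finite,linorder} \<Rightarrow> real) \<Rightarrow> (real \<Rightarrow> real^'n::{finite,linorder}^'n::{finite,linorder} \<Rightarrow> real) \<Rightarrow> bool" where
  "heat_solution_On phi u \<longleftrightarrow>
     (\<forall>x. orthogonal_matrix x \<longrightarrow> u 0 x = phi x) \<and>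
     continuous_on ({0..} \<times> {x. orthogonal_matrix x}) (\<lambda>(t, x). u t x) \<and>
     (\<forall>t>0. \<forall>x. orthogonal_matrix x \<longrightarrow> (\<forall>i j.
        (\<forall>s. (\<lambda>r. u t (x ** rot_exp i j r)) differentiable (at s)) \<and>
        (\<lambda>r. lie_X i j (u t) (x ** rot_exp i j r)) differentiable (at 0))) \<and>
     (\<forall>t>0. \<forall>x. orthogonal_matrix x \<longrightarrow>
        ((\<lambda>s. u s x) has_real_derivative laplacian_On (u t) x) (at t))"

end

theory Submission
  imports Defs
begin


definition N1 :: "real^'n::finite^'n \<Rightarrow> 'n \<Rightarrow> 'n \<Rightarrow> real^'n^'n" where
  "N1 M i j = (\<chi> a b. if b = i then - M$a$j else if b = j then M$a$i else 0)"
definition N2 :: "real^'n::finite^'n \<Rightarrow> 'n \<Rightarrow> 'n \<Rightarrow> real^'n^'n" where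
  "N2 M i j = (\<chi> a b. if b = i then - M$a$i else if b = j then - M$a$j else 0)"

lemma rot_entry:
  fixes X :: "real^'n::finite^'n"
  assumes "i \<noteq> j"
  shows "(X ** rot_exp i j r)$a$b = (if b = i then X$a$i * cos r - X$a$j * sin r
          else if b = j then X$a$i * sin r + X$a$j * cos r else X$a$b)"
proof -
  have "(X ** rot_exp i j r)$a$b = (\<Sum>k\<in>UNIV. X$a$k * rot_exp i j r $k$b)"
    by (simp add: matrix_matrix_mult_def)
  also have "\<dots> = (if b = i then X$a$i * cos r - X$a$j * sin r
          else if b = j then X$a$i * sin r + X$a$j * cos r else X$a$b)"
  proof (cases "b = i")
    case True
    have "(\<Sum>k\<in>UNIV. X$a$k * rot_exp i j r $k$b) = (\<Sum>k\<in>UNIV. (if k = i then X$a$i * cos r else 0) + (if k = j then - X$a$j * sin r else 0))"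
      by (rule sum.cong) (use True assms in \<open>auto simp: rot_exp_def\<close>)
    then show ?thesis using True assms by (simp add: sum.distrib)
  next
    case F: False
    show ?thesis
    proof (cases "b = j")
      case True
      have "(\<Sum>k\<in>UNIV. X$a$k * rot_exp i j r $k$b) = (\<Sum>k\<in>UNIV. (if k = i then X$a$i * sin r else 0) + (if k = j then X$a$j * cos r else 0))"
        by (rule sum.cong) (use True assms in \<open>auto simp: rot_exp_def\<close>)
      then show ?thesis using True F assms by (simp add: sum.distrib)
    next
      case False
      have "(\<Sum>k\<in>UNIV. X$a$k * rot_exp i j r $k$b) = (\<Sum>k\<in>UNIV. (if k = b then X$a$b else 0))"
        by (rule sum.cong) (use False F assms in \<open>auto simp: rot_exp_def\<close>)
      then show ?thesis using False F by simp
    qed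
  qed
  finally show ?thesis .
qed

lemma rot_curve:
  fixes X :: "real^'n::finite^'n"
  assumes "i \<noteq> j"
  shows "X ** rot_exp i j r = X + sin r *\<^sub>R N1 X i j + (1 - cos r) *\<^sub>R N2 X i j"
  using assms by (auto simp: vec_eq_iff rot_entry N1_def N2_def algebra_simps)

lemma rot_add:
  assumes "i \<noteq> j"
  shows "rot_exp i j s ** rot_exp i j r = (rot_exp i j (s + r) :: real^'n::finite^'n)"
proof -
  have "\<And>a b. (rot_exp i j s ** rot_exp i j r)$a$b = (rot_exp i j (s + r) :: real^'n^'n)$a$b"
    unfolding rot_entry[OF assms] using assms
    by (cases "a = i"; cases "a = j"; cases "b = i"; cases "b = j"; simp add: rot_exp_def cos_add sin_add; simp add: algebra_simps)
  then show ?thesis by (simp add: vec_eq_iff)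
qed

lemma rot_orth:
  assumes "i \<noteq> j"
  shows "orthogonal_matrix (rot_exp i j r :: real^'n::finite^'n)"
proof -
  have "transpose (rot_exp i j r) ** rot_exp i j r = (mat 1 :: real^'n^'n)"
  proof -
    have "\<And>a b. (transpose (rot_exp i j r) ** rot_exp i j r)$a$b = (mat 1 :: real^'n^'n)$a$b"
    proof -
      have cs: "cos r * cos r + sin r * sin r = 1" "sin r * sin r + cos r * cos r = 1"
        by (simp_all add: power2_eq_square[symmetric])
      fix a b show "(transpose (rot_exp i j r) ** rot_exp i j r)$a$b = (mat 1 :: real^'n^'n)$a$b"
      unfolding rot_entry[OF assms] using assms cs
      by (cases "a = i"; cases "a = j"; cases "b = i"; cases "b = j"; simp add: rot_exp_def transpose_def mat_def; simp add: algebra_simps)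
    qed
    then show ?thesis by (simp add: vec_eq_iff)
  qed
  then show ?thesis by (simp add: orthogonal_matrix)
qed



definition ta :: "real \<Rightarrow> real \<Rightarrow> real \<Rightarrow> real \<Rightarrow> real" where
  "ta a b c r = a + b * sin r + c * (1 - cos r)"

definition c2 :: "(real \<Rightarrow> real) \<Rightarrow> real \<Rightarrow> bool" where
  "c2 g D \<longleftrightarrow> (\<exists>g'. (\<forall>r. (g has_real_derivative g' r) (at r)) \<and> (g' has_real_derivative D) (at 0))"

lemma c2_add: "c2 g D \<Longrightarrow> c2 h E \<Longrightarrow> c2 (\<lambda>r. g r + h r) (D + E)"
  unfolding c2_def
proof (elim exE conjE)
  fix g' h' assume "\<forall>r. (g has_real_derivative g' r) (at r)" "(g' has_real_derivative D) (at 0)"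
    "\<forall>r. (h has_real_derivative h' r) (at r)" "(h' has_real_derivative E) (at 0)"
  then show "\<exists>k'. (\<forall>r. ((\<lambda>r. g r + h r) has_real_derivative k' r) (at r)) \<and> (k' has_real_derivative D + E) (at 0)"
    by (intro exI[of _ "\<lambda>r. g' r + h' r"]) (auto intro!: derivative_intros)
qed

lemma c2_cmult: "c2 g D \<Longrightarrow> c2 (\<lambda>r. k * g r) (k * D)"
  unfolding c2_def
proof (elim exE conjE)
  fix g' assume "\<forall>r. (g has_real_derivative g' r) (at r)" "(g' has_real_derivative D) (at 0)"
  then show "\<exists>k'. (\<forall>r. ((\<lambda>r. k * g r) has_real_derivative k' r) (at r)) \<and> (k' has_real_derivative k * D) (at 0)"
    by (intro exI[of _ "\<lambda>r. k * g' r"]) (auto intro!: DERIV_cmult)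
qed

lemma c2_const: "c2 (\<lambda>r. k) 0"
  unfolding c2_def by (intro exI[of _ "\<lambda>r. 0"]) (auto intro!: derivative_intros)

lemma c2_sum: "finite S \<Longrightarrow> (\<And>p. p \<in> S \<Longrightarrow> c2 (g p) (D p)) \<Longrightarrow> c2 (\<lambda>r. \<Sum>p\<in>S. g p r) (\<Sum>p\<in>S. D p)"
proof (induction S rule: finite_induct)
  case empty
  then show ?case using c2_const[of 0] by simp
next
  case (insert x F)
  then show ?case using c2_add[of "g x" "D x" "\<lambda>r. \<Sum>p\<in>F. g p r" "\<Sum>p\<in>F. D p"] by simp
qed

lemma c2_cong: "c2 g D \<Longrightarrow> (\<And>r. g r = h r) \<Longrightarrow> D = E \<Longrightarrow> c2 h E"
proof -
  assume "c2 g D" "\<And>r. g r = h r" "D = E"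
  moreover then have "g = h" by auto
  ultimately show ?thesis by simp
qed

lemma c2_prod: "c2 (\<lambda>r. ta a b c r * ta a' b' c' r) (2*b*b' + a*c' + a'*c)"
  unfolding c2_def
proof (intro exI[of _ "\<lambda>r. (b * cos r + c * sin r) * ta a' b' c' r + ta a b c r * (b' * cos r + c' * sin r)"] conjI allI)
  fix r show "((\<lambda>r. ta a b c r * ta a' b' c' r) has_real_derivative
    (b * cos r + c * sin r) * ta a' b' c' r + ta a b c r * (b' * cos r + c' * sin r)) (at r)"
    unfolding ta_def by (auto intro!: derivative_eq_intros simp: algebra_simps)
next
  show "((\<lambda>r. (b * cos r + c * sin r) * ta a' b' c' r + ta a b c r * (b' * cos r + c' * sin r)) has_real_derivative
    2*b*b' + a*c' + a'*c) (at 0)"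
    unfolding ta_def by (auto intro!: derivative_eq_intros simp: algebra_simps)
qed

lemma second_max:
  fixes G G' :: "real \<Rightarrow> real"
  assumes d1: "\<forall>r. (G has_real_derivative G' r) (at r)" and d2: "(G' has_real_derivative D) (at 0)"
    and mx: "\<forall>r. G r \<le> G 0"
  shows "D \<le> 0"
proof (rule ccontr)
  assume "\<not> D \<le> 0"
  then have "D > 0" by simp
  have "G' 0 = 0"
    by (rule DERIV_local_max[where f=G and x=0 and l="G' 0" and d=1]) (use d1 mx in auto)
  from DERIV_pos_inc_right[OF d2 \<open>D > 0\<close>] obtain d where d: "d > 0" "\<forall>h>0. h < d \<longrightarrow> G' 0 < G' (0 + h)"
    by blast
  have "\<exists>z. 0 < z \<and> z < d/2 \<and> G (d/2) - G 0 = (d/2 - 0) * G' z"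
    using d1 d by (intro MVT2) auto
  then obtain z where z: "0 < z" "z < d/2" "G (d/2) - G 0 = (d/2) * G' z" by auto
  have "G' z > 0" using d(2) z \<open>G' 0 = 0\<close> by auto
  then have "(d/2) * G' z > 0" using d by simp
  then have "G (d/2) - G 0 > 0" using z(3) by linarith
  with mx show False by (metis diff_gt_0_iff_gt not_le)
qed

lemma second_cmp:
  fixes g g' h :: "real \<Rightarrow> real"
  assumes "\<forall>r. (g has_real_derivative g' r) (at r)" "(g' has_real_derivative Dg) (at 0)"
    and "c2 h Dh" and "\<forall>r. g r - h r \<le> g 0 - h 0"
  shows "Dg \<le> Dh"
proof -
  from assms(3) obtain h' where h: "\<forall>r. (h has_real_derivative h' r) (at r)" "(h' has_real_derivative Dh) (at 0)"
    unfolding c2_def by blast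
  have "Dg - Dh \<le> 0"
    by (rule second_max[of "\<lambda>r. g r - h r" "\<lambda>r. g' r - h' r"])
       (use assms h in \<open>auto intro!: derivative_intros\<close>)
  then show ?thesis by simp
qed

lemma second_cmp2:
  fixes g g' h :: "real \<Rightarrow> real"
  assumes "\<forall>r. (g has_real_derivative g' r) (at r)" "(g' has_real_derivative Dg) (at 0)"
    and "c2 h Dh" and "\<forall>r. h r - g r \<le> h 0 - g 0"
  shows "Dh \<le> Dg"
proof -
  have "- Dg \<le> - Dh"
    by (rule second_cmp[of "\<lambda>r. - g r" "\<lambda>r. - g' r" _ "\<lambda>r. - h r"])
       (use assms in \<open>auto intro!: derivative_intros dest: c2_cmult[where k="-1"]\<close>)
  then show ?thesis by simp
qed

lemma time_max:
  fixes f :: "real \<Rightarrow> real"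
  assumes "(f has_real_derivative D) (at t1)" "\<forall>t. t1 - d < t \<and> t < t1 \<longrightarrow> f t \<le> f t1" "d > 0"
  shows "D \<ge> 0"
proof (rule ccontr)
  assume "\<not> D \<ge> 0"
  then have "D < 0" by simp
  from DERIV_neg_dec_left[OF assms(1) this] obtain e where e: "e > 0" "\<forall>h>0. h < e \<longrightarrow> f t1 < f (t1 - h)" by blast
  define h where "h = min e d / 2"
  have "h > 0" "h < e" "h < d" using e assms(3) by (auto simp: h_def)
  then have "f t1 < f (t1 - h)" using e by auto
  moreover have "f (t1 - h) \<le> f t1" using assms(2) \<open>h > 0\<close> \<open>h < d\<close> by auto
  ultimately show False by simp
qed



lemma lie_facts:
  fixes f :: "real^'n::finite^'n \<Rightarrow> real"
  assumes ij: "i \<noteq> j"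
    and d1: "\<forall>s. (\<lambda>r. f (x ** rot_exp i j r)) differentiable (at s)"
    and d2: "(\<lambda>r. lie_X i j f (x ** rot_exp i j r)) differentiable (at 0)"
  shows "\<forall>r. ((\<lambda>r. f (x ** rot_exp i j r)) has_real_derivative deriv (\<lambda>r. f (x ** rot_exp i j r)) r) (at r)"
    and "(deriv (\<lambda>r. f (x ** rot_exp i j r)) has_real_derivative lie_X i j (lie_X i j f) x) (at 0)"
proof -
  define g where "g = (\<lambda>r. f (x ** rot_exp i j r))"
  have dg: "\<And>s. (g has_real_derivative deriv g s) (at s)"
    using d1 unfolding g_def by (simp add: DERIV_deriv_iff_real_differentiable)
  then show "\<forall>r. ((\<lambda>r. f (x ** rot_exp i j r)) has_real_derivative deriv (\<lambda>r. f (x ** rot_exp i j r)) r) (at r)"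
    unfolding g_def by blast
  have eq: "lie_X i j f (x ** rot_exp i j s) = deriv g s" for s
  proof -
    have "(\<lambda>r. f (x ** rot_exp i j s ** rot_exp i j r)) = (\<lambda>r. g (r + s))"
      by (auto simp: g_def matrix_mul_assoc[symmetric] rot_add[OF ij] add.commute)
    moreover have "((\<lambda>r. g (r + s)) has_real_derivative deriv g s) (at 0)"
      using dg[of s] DERIV_shift[of g "deriv g s" 0 s] by simp
    ultimately show ?thesis unfolding lie_X_def by (simp add: DERIV_imp_deriv)
  qed
  then have "(\<lambda>r. lie_X i j f (x ** rot_exp i j r)) = deriv g" by auto
  with d2 have "deriv g differentiable (at 0)" by simp
  then have "(deriv g has_real_derivative deriv (deriv g) 0) (at 0)"
    by (simp add: DERIV_deriv_iff_real_differentiable)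
  moreover have "lie_X i j (lie_X i j f) x = deriv (deriv g) 0"
    unfolding lie_X_def[of i j "lie_X i j f"] using \<open>(\<lambda>r. lie_X i j f (x ** rot_exp i j r)) = deriv g\<close> by simp
  ultimately show "(deriv (\<lambda>r. f (x ** rot_exp i j r)) has_real_derivative lie_X i j (lie_X i j f) x) (at 0)"
    unfolding g_def by simp
qed

lemma trace_scaleR: "trace (k *\<^sub>R (X :: real^'n::finite^'n)) = k * trace X"
  by (simp add: trace_def sum_distrib_left)

lemma trace_N1: "i \<noteq> j \<Longrightarrow> trace (N1 M i j) = M$j$i - M$i$j"
proof -
  assume ij: "i \<noteq> j"
  have "trace (N1 M i j) = (\<Sum>a\<in>UNIV. (if a = i then - M$i$j else 0) + (if a = j then M$j$i else 0))"
    unfolding trace_def N1_def by (rule sum.cong) (use ij in auto)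
  then show ?thesis by (simp add: sum.distrib)
qed

lemma trace_N2: "i \<noteq> j \<Longrightarrow> trace (N2 M i j) = - (M$i$i + M$j$j)"
proof -
  assume ij: "i \<noteq> j"
  have "trace (N2 M i j) = (\<Sum>a\<in>UNIV. (if a = i then - M$i$i else 0) + (if a = j then - M$j$j else 0))"
    unfolding trace_def N2_def by (rule sum.cong) (use ij in auto)
  then show ?thesis by (simp add: sum.distrib)
qed

definition phiF :: "real^'n::finite^'n \<Rightarrow> real \<Rightarrow> real^'n^'n \<Rightarrow> real" where
  "phiF A c y = (trace (A ** y) - c)^2"

definition Dphi :: "real \<Rightarrow> real^'n::finite^'n \<Rightarrow> 'n \<Rightarrow> 'n \<Rightarrow> real" where
  "Dphi c M i j = 2 * (M$j$i - M$i$j)^2 - 2 * (trace M - c) * (M$i$i + M$j$j)"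

definition psiF :: "real^'n::{finite,linorder}^'n::{finite,linorder} \<Rightarrow> real \<Rightarrow> real^'n::{finite,linorder}^'n::{finite,linorder} \<Rightarrow> real" where
  "psiF A c y = (1/2) * (\<Sum>(i,j)\<in>{(i,j). i < j}. Dphi c (A ** y) i j)"

definition Dp :: "real \<Rightarrow> real \<Rightarrow> real \<Rightarrow> real \<Rightarrow> real \<Rightarrow> real \<Rightarrow> real" where
  "Dp a b c a' b' c' = 2*b*b' + a*c' + a'*c"

definition Dpsi :: "real \<Rightarrow> real^'n::{finite,linorder}^'n::{finite,linorder} \<Rightarrow> real^'n::{finite,linorder}^'n::{finite,linorder} \<Rightarrow> real^'n::{finite,linorder}^'n::{finite,linorder} \<Rightarrow> real" where
  "Dpsi c M P1 P2 = (1/2) * (\<Sum>(p,q)\<in>{(p,q). p < q}.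
     2 * Dp (M$q$p - M$p$q) (P1$q$p - P1$p$q) (P2$q$p - P2$p$q) (M$q$p - M$p$q) (P1$q$p - P1$p$q) (P2$q$p - P2$p$q)
   - 2 * Dp (trace M - c) (trace P1) (trace P2) (M$p$p + M$q$q) (P1$p$p + P1$q$q) (P2$p$p + P2$q$q))"

lemma c2_diff: "c2 g D \<Longrightarrow> c2 h E \<Longrightarrow> c2 (\<lambda>r. g r - h r) (D - E)"
  using c2_add[of g D "\<lambda>r. (-1) * h r" "(-1) * E"] c2_cmult[of h E "-1"] by simp

lemma c2_prodDp: "c2 (\<lambda>r. ta a b c r * ta a' b' c' r) (Dp a b c a' b' c')"
  unfolding Dp_def by (rule c2_prod)

lemma curve_A:
  assumes "i \<noteq> j"
  shows "A ** (x ** rot_exp i j r) = (A ** x) + sin r *\<^sub>R N1 (A ** x) i j + (1 - cos r) *\<^sub>R N2 (A ** x) i j"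
  by (simp add: matrix_mul_assoc rot_curve[OF assms])

lemma phi_c2:
  assumes ij: "i \<noteq> j"
  shows "c2 (\<lambda>r. phiF A c (x ** rot_exp i j r)) (Dphi c (A ** x) i j)"
proof -
  define M where "M = A ** x"
  let ?a = "trace M - c" and ?b = "M$j$i - M$i$j" and ?c = "- (M$i$i + M$j$j)"
  have "c2 (\<lambda>r. ta ?a ?b ?c r * ta ?a ?b ?c r) (Dp ?a ?b ?c ?a ?b ?c)"
    using c2_prod unfolding Dp_def .
  then show ?thesis
  proof (rule c2_cong)
    fix r show "ta ?a ?b ?c r * ta ?a ?b ?c r = phiF A c (x ** rot_exp i j r)"
      unfolding phiF_def curve_A[OF ij] M_def[symmetric] trace_add trace_scaleR trace_N1[OF ij] trace_N2[OF ij] ta_def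
      by (simp add: power2_eq_square algebra_simps)
  next
    show "Dp ?a ?b ?c ?a ?b ?c = Dphi c (A ** x) i j"
      unfolding Dp_def Dphi_def M_def by (simp add: power2_eq_square algebra_simps)
  qed
qed

lemma Dphi_curve:
  fixes M P1 P2 :: "real^'n::finite^'n::finite"
  shows "Dphi c (M + sin r *\<^sub>R P1 + (1 - cos r) *\<^sub>R P2) p q =
     2 * (ta (M$q$p - M$p$q) (P1$q$p - P1$p$q) (P2$q$p - P2$p$q) r * ta (M$q$p - M$p$q) (P1$q$p - P1$p$q) (P2$q$p - P2$p$q) r)
   - 2 * (ta (trace M - c) (trace P1) (trace P2) r * ta (M$p$p + M$q$q) (P1$p$p + P1$q$q) (P2$p$p + P2$q$q) r)"
  unfolding Dphi_def ta_def trace_add trace_scaleR by (simp add: power2_eq_square algebra_simps)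

lemma psi_c2:
  fixes A :: "real^'n::{finite,linorder}^'n::{finite,linorder}"
  assumes ij: "i \<noteq> j"
  shows "c2 (\<lambda>r. psiF A c (x ** rot_exp i j r)) (Dpsi c (A ** x) (N1 (A ** x) i j) (N2 (A ** x) i j))"
proof -
  define M where "M = A ** x"
  define P1 where "P1 = N1 M i j"
  define P2 where "P2 = N2 M i j"
  define g where "g = (\<lambda>pq r. case pq of (p,q) \<Rightarrow>
    2 * (ta (M$q$p - M$p$q) (P1$q$p - P1$p$q) (P2$q$p - P2$p$q) r * ta (M$q$p - M$p$q) (P1$q$p - P1$p$q) (P2$q$p - P2$p$q) r)
   - 2 * (ta (trace M - c) (trace P1) (trace P2) r * ta (M$p$p + M$q$q) (P1$p$p + P1$q$q) (P2$p$p + P2$q$q) r))"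
  define D where "D = (\<lambda>pq. case pq of (p,q) \<Rightarrow>
     2 * Dp (M$q$p - M$p$q) (P1$q$p - P1$p$q) (P2$q$p - P2$p$q) (M$q$p - M$p$q) (P1$q$p - P1$p$q) (P2$q$p - P2$p$q)
   - 2 * Dp (trace M - c) (trace P1) (trace P2) (M$p$p + M$q$q) (P1$p$p + P1$q$q) (P2$p$p + P2$q$q))"
  have "c2 (g pq) (D pq)" for pq
  proof (cases pq)
    case (Pair p q)
    show ?thesis unfolding Pair g_def D_def prod.case
      by (intro c2_diff c2_cmult c2_prodDp)
  qed
  then have "c2 (\<lambda>r. \<Sum>pq\<in>{(p,q). p < q}. g pq r) (\<Sum>pq\<in>{(p,q). p < q}. D pq)"
    by (intro c2_sum) auto
  then have "c2 (\<lambda>r. (1/2) * (\<Sum>pq\<in>{(p,q). p < q}. g pq r)) ((1/2) * (\<Sum>pq\<in>{(p,q). p < q}. D pq))"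
    by (rule c2_cmult)
  then show ?thesis
  proof (rule c2_cong)
    fix r show "(1/2) * (\<Sum>pq\<in>{(p,q). p < q}. g pq r) = psiF A c (x ** rot_exp i j r)"
      unfolding psiF_def curve_A[OF ij] M_def[symmetric] P1_def[symmetric] P2_def[symmetric] Dphi_curve
      by (simp add: g_def case_prod_beta')
  next
    show "(1/2) * (\<Sum>pq\<in>{(p,q). p < q}. D pq) = Dpsi c (A ** x) (N1 (A ** x) i j) (N2 (A ** x) i j)"
      unfolding Dpsi_def M_def[symmetric] P1_def[symmetric] P2_def[symmetric] D_def by (simp add: case_prod_beta')
  qed
qed



lemma orth_entry:
  fixes x :: "real^'n::finite^'n::finite"
  assumes "orthogonal_matrix x"
  shows "\<bar>x$k$b\<bar> \<le> 1"
proof -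
  have "norm (row k x) = 1" using assms orthogonal_matrix_orthonormal_rows by blast
  moreover have "row k x = x$k" by (simp add: row_def vec_eq_iff)
  ultimately show ?thesis using component_le_norm_cart[of "x$k" b] by simp
qed

definition KA :: "real^'n::finite^'n::finite \<Rightarrow> real" where
  "KA A = (\<Sum>a\<in>UNIV. \<Sum>k\<in>UNIV. \<bar>A$a$k\<bar>)"

lemma KA_nonneg: "KA A \<ge> 0"
  unfolding KA_def by (intro sum_nonneg) auto

lemma entry_AM:
  fixes A x :: "real^'n::finite^'n::finite"
  assumes "orthogonal_matrix x"
  shows "\<bar>(A ** x)$a$b\<bar> \<le> KA A"
proof -
  have "\<bar>(A ** x)$a$b\<bar> = \<bar>\<Sum>k\<in>UNIV. A$a$k * x$k$b\<bar>" by (simp add: matrix_matrix_mult_def)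
  also have "\<dots> \<le> (\<Sum>k\<in>UNIV. \<bar>A$a$k * x$k$b\<bar>)" by (rule sum_abs)
  also have "\<dots> \<le> (\<Sum>k\<in>UNIV. \<bar>A$a$k\<bar>)"
  proof (rule sum_mono)
    fix k
    have "\<bar>x$k$b\<bar> \<le> 1" by (rule orth_entry[OF assms])
    then show "\<bar>A$a$k * x$k$b\<bar> \<le> \<bar>A$a$k\<bar>"
      by (simp add: abs_mult mult_left_le)
  qed
  also have "\<dots> \<le> KA A" unfolding KA_def
    by (rule member_le_sum[where f="\<lambda>a. \<Sum>k\<in>UNIV. \<bar>A$a$k\<bar>"]) (auto intro: sum_nonneg)
  finally show ?thesis .
qed

lemma N1_bound: "(\<And>a b. \<bar>M$a$b\<bar> \<le> K) \<Longrightarrow> \<bar>N1 M i j $a$b\<bar> \<le> K"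
proof -
  assume h: "\<And>a b. \<bar>M$a$b\<bar> \<le> K"
  then have "0 \<le> K" by (meson abs_ge_zero order_trans)
  then show ?thesis using h unfolding N1_def by auto
qed

lemma N2_bound: "(\<And>a b. \<bar>M$a$b\<bar> \<le> K) \<Longrightarrow> \<bar>N2 M i j $a$b\<bar> \<le> K"
proof -
  assume h: "\<And>a b. \<bar>M$a$b\<bar> \<le> K"
  then have "0 \<le> K" by (meson abs_ge_zero order_trans)
  then show ?thesis using h unfolding N2_def by auto
qed

lemma trace_bound:
  fixes M :: "real^'n::finite^'n::finite"
  shows "(\<And>a b. \<bar>M$a$b\<bar> \<le> K) \<Longrightarrow> \<bar>trace M\<bar> \<le> real CARD('n) * K"
proof -
  assume h: "\<And>a b. \<bar>M$a$b\<bar> \<le> K"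
  have "\<bar>trace M\<bar> \<le> (\<Sum>a\<in>UNIV. \<bar>M$a$a\<bar>)" unfolding trace_def by (rule sum_abs)
  also have "\<dots> \<le> real CARD('n) * K"
    using sum_bounded_above[of UNIV "\<lambda>a. \<bar>M$a$a\<bar>" K] h by simp
  finally show ?thesis .
qed

lemma Dp_bound:
  assumes "\<bar>a\<bar> \<le> L" "\<bar>b\<bar> \<le> L" "\<bar>c\<bar> \<le> L" "\<bar>a'\<bar> \<le> L" "\<bar>b'\<bar> \<le> L" "\<bar>c'\<bar> \<le> L"
  shows "\<bar>Dp a b c a' b' c'\<bar> \<le> 4 * L^2"
proof -
  have "\<bar>b * b'\<bar> \<le> L * L" "\<bar>a * c'\<bar> \<le> L * L" "\<bar>a' * c\<bar> \<le> L * L"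
    using assms by (auto simp: abs_mult intro!: mult_mono)
  then show ?thesis unfolding Dp_def power2_eq_square by (auto simp: abs_le_iff)
qed

lemma Dpsi_bound:
  fixes M P1 P2 :: "real^'n::{finite,linorder}^'n::{finite,linorder}"
  assumes K: "K \<ge> 0" and hM: "\<And>a b. \<bar>M$a$b\<bar> \<le> K" and h1: "\<And>a b. \<bar>P1$a$b\<bar> \<le> K"
    and h2: "\<And>a b. \<bar>P2$a$b\<bar> \<le> K" and hc: "\<bar>c\<bar> \<le> real CARD('n) * K"
  shows "\<bar>Dpsi c M P1 P2\<bar> \<le> 8 * real CARD('n)^2 * (2 * (real CARD('n) + 1) * K)^2"
proof -
  define n where "n = real CARD('n)"
  define L where "L = 2 * (n + 1) * K"
  have n0: "n \<ge> 1" unfolding n_def by simp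
  have L1: "2 * K \<le> L" using K n0 unfolding L_def by (simp add: mult_right_mono)
  have L2: "2 * n * K \<le> L" using K n0 unfolding L_def by (simp add: mult_right_mono algebra_simps)
  have "n * K \<ge> 0" using n0 K by simp
  then have L3: "n * K \<le> L" using L2 by linarith
  have tM: "\<bar>trace M\<bar> \<le> n * K" using trace_bound[OF hM] n_def by simp
  have t1: "\<bar>trace P1\<bar> \<le> n * K" using trace_bound[OF h1] n_def by simp
  have t2: "\<bar>trace P2\<bar> \<le> n * K" using trace_bound[OF h2] n_def by simp
  have sub: "\<And>u v. \<bar>u\<bar> \<le> K \<Longrightarrow> \<bar>v\<bar> \<le> K \<Longrightarrow> \<bar>u - v\<bar> \<le> L" using L1 by (auto simp: abs_le_iff)
  have add: "\<And>u v. \<bar>u\<bar> \<le> K \<Longrightarrow> \<bar>v\<bar> \<le> K \<Longrightarrow> \<bar>u + v\<bar> \<le> L" using L1 by (auto simp: abs_le_iff)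
  have tc: "\<bar>trace M - c\<bar> \<le> L" using tM hc L2 n_def by (auto simp: abs_le_iff)
  define S where "S = {(p,q). (p::'n) < q}"
  have hterm: "\<bar>2 * Dp (M$q$p - M$p$q) (P1$q$p - P1$p$q) (P2$q$p - P2$p$q) (M$q$p - M$p$q) (P1$q$p - P1$p$q) (P2$q$p - P2$p$q)
   - 2 * Dp (trace M - c) (trace P1) (trace P2) (M$p$p + M$q$q) (P1$p$p + P1$q$q) (P2$p$p + P2$q$q)\<bar> \<le> 16 * L^2"
    for p q
  proof -
    have "\<bar>Dp (M$q$p - M$p$q) (P1$q$p - P1$p$q) (P2$q$p - P2$p$q) (M$q$p - M$p$q) (P1$q$p - P1$p$q) (P2$q$p - P2$p$q)\<bar> \<le> 4 * L^2"
      by (intro Dp_bound sub hM h1 h2)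
    moreover have "\<bar>Dp (trace M - c) (trace P1) (trace P2) (M$p$p + M$q$q) (P1$p$p + P1$q$q) (P2$p$p + P2$q$q)\<bar> \<le> 4 * L^2"
      by (intro Dp_bound add hM h1 h2 tc) (use t1 t2 L3 in auto)
    ultimately show ?thesis by (auto simp: abs_le_iff)
  qed
  have "\<bar>\<Sum>(p,q)\<in>S. 2 * Dp (M$q$p - M$p$q) (P1$q$p - P1$p$q) (P2$q$p - P2$p$q) (M$q$p - M$p$q) (P1$q$p - P1$p$q) (P2$q$p - P2$p$q)
   - 2 * Dp (trace M - c) (trace P1) (trace P2) (M$p$p + M$q$q) (P1$p$p + P1$q$q) (P2$p$p + P2$q$q)\<bar>
    \<le> (\<Sum>(p,q)\<in>S. 16 * L^2)"
    by (rule order_trans[OF sum_abs]) (rule sum_mono, use hterm in auto)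
  also have "\<dots> = real (card S) * (16 * L^2)" by simp
  also have "\<dots> \<le> n^2 * (16 * L^2)"
  proof -
    have "card S \<le> card (UNIV :: ('n \<times> 'n) set)" by (rule card_mono) auto
    moreover have "card (UNIV :: ('n \<times> 'n) set) = CARD('n) * CARD('n)"
      by (metis UNIV_Times_UNIV card_cartesian_product)
    ultimately have "card S \<le> CARD('n) * CARD('n)" by simp
    then have "real (card S) \<le> real CARD('n) * real CARD('n)" by (metis of_nat_le_iff of_nat_mult)
    then have "real (card S) \<le> n^2" by (simp add: n_def power2_eq_square)
    then show ?thesis by (rule mult_right_mono) simp
  qed
  finally show ?thesis unfolding Dpsi_def S_def[symmetric] n_def[symmetric] L_def[symmetric]
    by (simp add: abs_mult)
qed



lemma isCont_entry: "isCont (\<lambda>x::real^'n::finite^'m::finite. x$k$a) p"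
  by simp

lemma cont_entry: "continuous_on S (\<lambda>x::real^'n::finite^'m::finite. x$k$a)"
  by (simp add: continuous_at_imp_continuous_on)

lemma cont_AM: "continuous_on S (\<lambda>x::real^'n::finite^'n::finite. (A ** x)$p$q)"
  unfolding matrix_matrix_mult_def by (simp add: cont_entry continuous_intros)

lemma cont_trAM: "continuous_on S (\<lambda>x::real^'n::finite^'n::finite. trace (A ** x))"
  unfolding trace_def by (intro continuous_intros cont_AM)

lemma cont_phi: "continuous_on S (\<lambda>x::real^'n::finite^'n::finite. phiF A c x)"
  unfolding phiF_def by (intro continuous_intros cont_trAM)

lemma cont_psi: "continuous_on S (\<lambda>x::real^'n::{finite,linorder}^'n::{finite,linorder}. psiF A c x)"
  unfolding psiF_def Dphi_def case_prod_beta by (intro continuous_intros cont_trAM cont_AM)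

lemma compact_O: "compact {x :: real^'n::finite^'n::finite. orthogonal_matrix x}"
proof -
  have Oeq: "{x :: real^'n^'n. orthogonal_matrix x} =
     (\<Inter>a. \<Inter>b. {x. (\<Sum>k\<in>UNIV. x$k$a * x$k$b) = (if a = b then 1 else 0)})"
    by (auto simp: orthogonal_matrix vec_eq_iff matrix_matrix_mult_def transpose_def mat_def)
  have "closed {x :: real^'n^'n. orthogonal_matrix x}"
    unfolding Oeq by (intro closed_INT ballI closed_Collect_eq continuous_intros cont_entry)
  moreover have "bounded {x :: real^'n^'n. orthogonal_matrix x}"
    unfolding bounded_iff
  proof (intro exI ballI)
    fix x :: "real^'n^'n" assume "x \<in> {x. orthogonal_matrix x}"
    then have h: "\<And>k. norm (x$k) = 1"
      using orthogonal_matrix_orthonormal_rows[of x] by (auto simp: row_def vec_eq_iff)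
    have "norm x \<le> (\<Sum>k\<in>UNIV. norm (x$k))"
      unfolding norm_vec_def by (rule L2_set_le_sum) auto
    then show "norm x \<le> real CARD('n)" using h by simp
  qed
  ultimately show ?thesis by (simp add: compact_eq_bounded_closed)
qed

lemma maxprin:
  fixes z :: "real \<Rightarrow> real^'n::finite^'n::finite \<Rightarrow> real"
  assumes T: "T > 0"
    and cont: "continuous_on ({0..T} \<times> {x. orthogonal_matrix x}) (\<lambda>(t,x). z t x)"
    and init: "\<And>x. orthogonal_matrix x \<Longrightarrow> z 0 x < 0"
    and step: "\<And>t x. 0 < t \<Longrightarrow> t \<le> T \<Longrightarrow> orthogonal_matrix x \<Longrightarrow> (\<forall>y. orthogonal_matrix y \<longrightarrow> z t y \<le> z t x)
        \<Longrightarrow> \<exists>D. ((\<lambda>s. z s x) has_real_derivative D) (at t) \<and> D < 0"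
    and t: "0 \<le> t" "t \<le> T" and x: "orthogonal_matrix x"
  shows "z t x < 0"
proof (rule ccontr)
  assume neg: "\<not> z t x < 0"
  define Om where "Om = {x :: real^'n^'n. orthogonal_matrix x}"
  define K where "K = {0..T} \<times> Om"
  define S where "S = K \<inter> (\<lambda>(t,x). z t x) -` {0..}"
  have cK: "compact K" unfolding K_def Om_def by (intro compact_Times compact_O compact_Icc)
  have "closed S" unfolding S_def
    by (rule continuous_closed_preimage) (use cont cK compact_imp_closed in \<open>auto simp: K_def Om_def\<close>)
  then have cS: "compact S" using cK unfolding S_def by (metis compact_Int_closed inf.absorb_iff2 inf_le1 S_def)
  have "(t, x) \<in> S" using neg t x by (auto simp: S_def K_def Om_def)
  then have "fst ` S \<noteq> {}" by auto
  moreover have "compact (fst ` S)" by (rule compact_continuous_image[OF continuous_on_fst[OF continuous_on_id] cS])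
  ultimately obtain t1 where t1: "t1 \<in> fst ` S" "\<forall>s\<in>fst ` S. t1 \<le> s"
    using compact_attains_inf by blast
  then obtain x0 where x0: "(t1, x0) \<in> S" by auto
  then have t1T: "0 \<le> t1" "t1 \<le> T" and x0O: "orthogonal_matrix x0" and zx0: "z t1 x0 \<ge> 0"
    by (auto simp: S_def K_def Om_def)
  have "t1 \<noteq> 0" using init[OF x0O] zx0 by auto
  with t1T have t1p: "t1 > 0" by simp
  have "continuous_on Om (\<lambda>y. z t1 y)"
  proof -
    have "continuous_on Om ((\<lambda>(t,x). z t x) \<circ> (\<lambda>y. (t1, y)))"
      by (rule continuous_on_compose) (auto intro!: continuous_intros continuous_on_subset[OF cont] simp: Om_def t1T)
    then show ?thesis by (simp add: o_def)
  qed
  moreover have "compact Om" "Om \<noteq> {}" unfolding Om_def using compact_O x0O by auto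
  ultimately obtain x1 where x1: "x1 \<in> Om" "\<forall>y\<in>Om. z t1 y \<le> z t1 x1"
    using continuous_attains_sup by blast
  from step[OF t1p t1T(2)] x1 obtain D where D: "((\<lambda>s. z s x1) has_real_derivative D) (at t1)" "D < 0"
    by (auto simp: Om_def)
  have "z t1 x1 \<ge> 0" using x1 x0O zx0 by (force simp: Om_def)
  have "\<forall>s. t1 - t1 < s \<and> s < t1 \<longrightarrow> z s x1 \<le> z t1 x1"
  proof (intro allI impI)
    fix s assume s: "t1 - t1 < s \<and> s < t1"
    have "(s, x1) \<notin> S"
    proof
      assume "(s, x1) \<in> S"
      then have "s \<in> fst ` S" by force
      then show False using t1(2) s by force
    qed
    then have "z s x1 < 0" using s t1T x1(1) by (auto simp: S_def K_def)
    then show "z s x1 \<le> z t1 x1" using \<open>z t1 x1 \<ge> 0\<close> by simp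
  qed
  from time_max[OF D(1) this t1p] D(2) show False by simp
qed



lemma rot0: "rot_exp i j 0 = (mat 1 :: real^'n::finite^'n::finite)"
  by (auto simp: rot_exp_def mat_def vec_eq_iff)

lemma sum_pairs:
  fixes M :: "real^'n::{finite,linorder}^'n::{finite,linorder}"
  shows "(\<Sum>(i,j)\<in>{(i,j). i < j}. (M$j$i - M$i$j)^2) = trace (M ** transpose M) - trace (M ** M)"
proof -
  define f where "f = (\<lambda>(i::'n,j::'n). (M$j$i - M$i$j)^2)"
  define P where "P = {(i::'n,j::'n). i < j}"
  define R where "R = {(i::'n,j::'n). j < i}"
  define E where "E = {(i::'n,j::'n). i = j}"
  have U: "(UNIV :: ('n \<times> 'n) set) = P \<union> R \<union> E" by (auto simp: P_def R_def E_def neq_iff)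
  have "sum f (UNIV :: ('n \<times> 'n) set) = sum f P + sum f R + sum f E"
  proof -
    have "sum f (P \<union> R \<union> E) = sum f (P \<union> R) + sum f E"
      by (rule sum.union_disjoint) (auto simp: P_def R_def E_def)
    moreover have "sum f (P \<union> R) = sum f P + sum f R"
      by (rule sum.union_disjoint) (auto simp: P_def R_def)
    ultimately show ?thesis unfolding U by simp
  qed
  moreover have "sum f E = 0" by (rule sum.neutral) (auto simp: E_def f_def)
  moreover have "sum f R = sum f P"
  proof -
    have "R = prod.swap ` P" by (auto simp: R_def P_def image_iff)
    then have "sum f R = sum (f \<circ> prod.swap) P" by (simp add: sum.reindex)
    also have "\<dots> = sum f P" by (rule sum.cong) (auto simp: f_def power2_commute)
    finally show ?thesis .
  qed
  ultimately have tot: "sum f (UNIV :: ('n \<times> 'n) set) = 2 * sum f P" by simp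
  have "sum f (UNIV :: ('n \<times> 'n) set) = (\<Sum>i\<in>UNIV. \<Sum>j\<in>UNIV. (M$j$i - M$i$j)^2)"
    unfolding f_def by (simp add: sum.cartesian_product flip: UNIV_Times_UNIV)
  also have "\<dots> = (\<Sum>i\<in>UNIV. \<Sum>j\<in>UNIV. M$j$i * M$j$i) + (\<Sum>i\<in>UNIV. \<Sum>j\<in>UNIV. M$i$j * M$i$j)
       - 2 * (\<Sum>i\<in>UNIV. \<Sum>j\<in>UNIV. M$i$j * M$j$i)"
    by (simp add: power2_eq_square algebra_simps sum.distrib sum_subtractf sum_distrib_left)
  also have "(\<Sum>i\<in>UNIV. \<Sum>j\<in>UNIV. M$j$i * M$j$i) = (\<Sum>i\<in>UNIV. \<Sum>j\<in>UNIV. M$i$j * M$i$j)"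
    by (rule sum.swap)
  finally have "sum f (UNIV :: ('n \<times> 'n) set) = 2 * ((\<Sum>i\<in>UNIV. \<Sum>j\<in>UNIV. M$i$j * M$i$j) - (\<Sum>i\<in>UNIV. \<Sum>j\<in>UNIV. M$i$j * M$j$i))"
    by simp
  moreover have "trace (M ** transpose M) = (\<Sum>i\<in>UNIV. \<Sum>j\<in>UNIV. M$i$j * M$i$j)"
    by (simp add: trace_def matrix_matrix_mult_def transpose_def)
  moreover have "trace (M ** M) = (\<Sum>i\<in>UNIV. \<Sum>j\<in>UNIV. M$i$j * M$j$i)"
    by (simp add: trace_def matrix_matrix_mult_def)
  ultimately show ?thesis using tot unfolding P_def f_def by simp
qed

lemma psi_at_Q:
  fixes A Q :: "real^'n::{finite,linorder}^'n::{finite,linorder}"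
  assumes "orthogonal_matrix Q" "trace (A ** transpose A) = real CARD('n)"
  shows "psiF A (trace (A ** Q)) Q = real CARD('n) - trace ((A ** Q) ** (A ** Q))"
proof -
  define M where "M = A ** Q"
  have "psiF A (trace (A ** Q)) Q = (\<Sum>(i,j)\<in>{(i,j). i < j}. (M$j$i - M$i$j)^2)"
    unfolding psiF_def Dphi_def M_def[symmetric] by (simp add: sum_distrib_left case_prod_beta')
  also have "\<dots> = trace (M ** transpose M) - trace (M ** M)" by (rule sum_pairs)
  also have "M ** transpose M = A ** transpose A"
    using assms(1) unfolding M_def orthogonal_matrix_def
    by (simp add: matrix_transpose_mul matrix_mul_assoc) (metis matrix_mul_assoc matrix_mul_rid)
  finally show ?thesis using assms(2) M_def by simp
qed



lemma cont_phi2: "continuous_on S (\<lambda>p::real \<times> (real^'n::finite^'n::finite). phiF A c (snd p))"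
  by (rule continuous_on_compose2[OF cont_phi[of UNIV] continuous_on_snd[OF continuous_on_id]]) auto

lemma cont_psi2: "continuous_on S (\<lambda>p::real \<times> (real^'n::{finite,linorder}^'n::{finite,linorder}). psiF A c (snd p))"
  by (rule continuous_on_compose2[OF cont_psi[of UNIV] continuous_on_snd[OF continuous_on_id]]) auto

definition SD :: "real^'n::{finite,linorder}^'n::{finite,linorder} \<Rightarrow> real \<Rightarrow> real^'n::{finite,linorder}^'n::{finite,linorder} \<Rightarrow> real" where
  "SD A c x = (1/2) * (\<Sum>(i,j)\<in>{(i,j). i < j}. Dpsi c (A**x) (N1 (A**x) i j) (N2 (A**x) i j))"

lemma pair_data:
  fixes A x :: "real^'n::{finite,linorder}^'n::{finite,linorder}"
  assumes hs: "heat_solution_On (\<lambda>y. (trace (A ** y) - c)^2) v"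
    and t: "t > 0" and x: "orthogonal_matrix x" and ij: "i \<noteq> j"
  shows "\<forall>r. ((\<lambda>r. v t (x ** rot_exp i j r)) has_real_derivative deriv (\<lambda>r. v t (x ** rot_exp i j r)) r) (at r)"
    and "(deriv (\<lambda>r. v t (x ** rot_exp i j r)) has_real_derivative lie_X i j (lie_X i j (v t)) x) (at 0)"
    and "c2 (\<lambda>r. phiF A c (x ** rot_exp i j r) + t * psiF A c (x ** rot_exp i j r))
           (Dphi c (A ** x) i j + t * Dpsi c (A ** x) (N1 (A ** x) i j) (N2 (A ** x) i j))"
proof -
  have d1: "\<forall>s. (\<lambda>r. v t (x ** rot_exp i j r)) differentiable (at s)"
    and d2: "(\<lambda>r. lie_X i j (v t) (x ** rot_exp i j r)) differentiable (at 0)"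
    using hs t x unfolding heat_solution_On_def by blast+
  show "\<forall>r. ((\<lambda>r. v t (x ** rot_exp i j r)) has_real_derivative deriv (\<lambda>r. v t (x ** rot_exp i j r)) r) (at r)"
    and "(deriv (\<lambda>r. v t (x ** rot_exp i j r)) has_real_derivative lie_X i j (lie_X i j (v t)) x) (at 0)"
    using lie_facts[OF ij d1 d2] by blast+
  show "c2 (\<lambda>r. phiF A c (x ** rot_exp i j r) + t * psiF A c (x ** rot_exp i j r))
           (Dphi c (A ** x) i j + t * Dpsi c (A ** x) (N1 (A ** x) i j) (N2 (A ** x) i j))"
    by (intro c2_add c2_cmult phi_c2 psi_c2 ij)
qed

lemma rot_mem:
  fixes x :: "real^'n::finite^'n::finite"
  shows "orthogonal_matrix x \<Longrightarrow> i \<noteq> j \<Longrightarrow> orthogonal_matrix (x ** rot_exp i j r)"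
  by (intro orthogonal_matrix_mul rot_orth)

lemma lap_upper:
  fixes A x :: "real^'n::{finite,linorder}^'n::{finite,linorder}"
  assumes hs: "heat_solution_On (\<lambda>y. (trace (A ** y) - c)^2) v"
    and t: "t > 0" and x: "orthogonal_matrix x"
    and mx: "\<forall>y. orthogonal_matrix y \<longrightarrow> v t y - (phiF A c y + t * psiF A c y) \<le> v t x - (phiF A c x + t * psiF A c x)"
  shows "laplacian_On (v t) x \<le> psiF A c x + t * SD A c x"
proof -
  have pw: "lie_X i j (lie_X i j (v t)) x \<le> Dphi c (A ** x) i j + t * Dpsi c (A ** x) (N1 (A ** x) i j) (N2 (A ** x) i j)"
    if "(i,j) \<in> {(i,j). i < j}" for i j
  proof -
    have ij: "i \<noteq> j" using that by auto
    note pd = pair_data[OF hs t x ij]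
    show ?thesis
    proof (rule second_cmp[OF pd(1) pd(2) pd(3)], intro allI)
      fix r
      have "orthogonal_matrix (x ** rot_exp i j r)" by (rule rot_mem[OF x ij])
      then show "v t (x ** rot_exp i j r) - (phiF A c (x ** rot_exp i j r) + t * psiF A c (x ** rot_exp i j r))
          \<le> v t (x ** rot_exp i j 0) - (phiF A c (x ** rot_exp i j 0) + t * psiF A c (x ** rot_exp i j 0))"
        using mx by (simp add: rot0)
    qed
  qed
  have "laplacian_On (v t) x \<le> (1/2) * (\<Sum>(i,j)\<in>{(i,j). i < j}. Dphi c (A ** x) i j + t * Dpsi c (A ** x) (N1 (A ** x) i j) (N2 (A ** x) i j))"
    unfolding laplacian_On_def by (intro mult_left_mono sum_mono) (use pw in auto)
  also have "\<dots> = psiF A c x + t * SD A c x"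
    unfolding psiF_def SD_def by (simp add: sum.distrib sum_distrib_left case_prod_beta' algebra_simps)
  finally show ?thesis .
qed

lemma lap_lower:
  fixes A x :: "real^'n::{finite,linorder}^'n::{finite,linorder}"
  assumes hs: "heat_solution_On (\<lambda>y. (trace (A ** y) - c)^2) v"
    and t: "t > 0" and x: "orthogonal_matrix x"
    and mx: "\<forall>y. orthogonal_matrix y \<longrightarrow> (phiF A c y + t * psiF A c y) - v t y \<le> (phiF A c x + t * psiF A c x) - v t x"
  shows "laplacian_On (v t) x \<ge> psiF A c x + t * SD A c x"
proof -
  have pw: "lie_X i j (lie_X i j (v t)) x \<ge> Dphi c (A ** x) i j + t * Dpsi c (A ** x) (N1 (A ** x) i j) (N2 (A ** x) i j)"
    if "(i,j) \<in> {(i,j). i < j}" for i j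
  proof -
    have ij: "i \<noteq> j" using that by auto
    note pd = pair_data[OF hs t x ij]
    show ?thesis
    proof (rule second_cmp2[OF pd(1) pd(2) pd(3)], intro allI)
      fix r
      have "orthogonal_matrix (x ** rot_exp i j r)" by (rule rot_mem[OF x ij])
      then show "(phiF A c (x ** rot_exp i j r) + t * psiF A c (x ** rot_exp i j r)) - v t (x ** rot_exp i j r)
          \<le> (phiF A c (x ** rot_exp i j 0) + t * psiF A c (x ** rot_exp i j 0)) - v t (x ** rot_exp i j 0)"
        using mx by (simp add: rot0)
    qed
  qed
  have "psiF A c x + t * SD A c x = (1/2) * (\<Sum>(i,j)\<in>{(i,j). i < j}. Dphi c (A ** x) i j + t * Dpsi c (A ** x) (N1 (A ** x) i j) (N2 (A ** x) i j))"
    unfolding psiF_def SD_def by (simp add: sum.distrib sum_distrib_left case_prod_beta' algebra_simps)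
  also have "\<dots> \<le> laplacian_On (v t) x"
    unfolding laplacian_On_def by (intro mult_left_mono sum_mono) (use pw in auto)
  finally show ?thesis .
qed



definition CC :: "real^'n::{finite,linorder}^'n::{finite,linorder} \<Rightarrow> real" where
  "CC A = real CARD('n)^2 * (8 * real CARD('n)^2 * (2 * (real CARD('n) + 1) * KA A)^2)"

lemma CC_nonneg: "CC A \<ge> 0" unfolding CC_def by simp

lemma SD_bound:
  fixes A x :: "real^'n::{finite,linorder}^'n::{finite,linorder}"
  assumes x: "orthogonal_matrix x" and hc: "\<bar>c\<bar> \<le> real CARD('n) * KA A"
  shows "\<bar>SD A c x\<bar> \<le> CC A"
proof -
  define B where "B = 8 * real CARD('n)^2 * (2 * (real CARD('n) + 1) * KA A)^2"
  have B0: "B \<ge> 0" unfolding B_def by simp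
  have hb: "\<bar>Dpsi c (A**x) (N1 (A**x) i j) (N2 (A**x) i j)\<bar> \<le> B" for i j
    unfolding B_def
    by (rule Dpsi_bound[OF KA_nonneg entry_AM[OF x] N1_bound[OF entry_AM[OF x]] N2_bound[OF entry_AM[OF x]] hc])
  define S where "S = {(i::'n,j::'n). i < j}"
  have "\<bar>\<Sum>(i,j)\<in>S. Dpsi c (A**x) (N1 (A**x) i j) (N2 (A**x) i j)\<bar> \<le> (\<Sum>(i,j)\<in>S. B)"
    by (rule order_trans[OF sum_abs]) (rule sum_mono, use hb in auto)
  also have "\<dots> = real (card S) * B" by simp
  also have "\<dots> \<le> real CARD('n)^2 * B"
  proof -
    have "card S \<le> card (UNIV :: ('n \<times> 'n) set)" by (rule card_mono) auto
    moreover have "card (UNIV :: ('n \<times> 'n) set) = CARD('n) * CARD('n)"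
      by (metis UNIV_Times_UNIV card_cartesian_product)
    ultimately have "card S \<le> CARD('n) * CARD('n)" by simp
    then have "real (card S) \<le> real CARD('n) * real CARD('n)" by (metis of_nat_le_iff of_nat_mult)
    then have "real (card S) \<le> real CARD('n)^2" by (simp add: power2_eq_square)
    then show ?thesis using B0 by (rule mult_right_mono)
  qed
  finally have "\<bar>\<Sum>(i,j)\<in>S. Dpsi c (A**x) (N1 (A**x) i j) (N2 (A**x) i j)\<bar> \<le> CC A"
    unfolding CC_def B_def[symmetric] .
  then show ?thesis unfolding SD_def S_def[symmetric] using CC_nonneg[of A] by (simp add: abs_mult)
qed

lemma upper_cmp:
  fixes A x :: "real^'n::{finite,linorder}^'n::{finite,linorder}"
  assumes hs: "heat_solution_On (\<lambda>y. (trace (A ** y) - c)^2) v"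
    and hc: "\<bar>c\<bar> \<le> real CARD('n) * KA A"
    and t: "0 < t" "t \<le> 1" and x: "orthogonal_matrix x" and e: "e > 0"
  shows "v t x - (phiF A c x + t * psiF A c x + CC A * t^2 + e * (1 + t)) < 0"
proof (rule maxprin[where z = "\<lambda>t x. v t x - (phiF A c x + t * psiF A c x + CC A * t^2 + e * (1 + t))" and T = 1])
  show "(0::real) < 1" by simp
  show "0 \<le> t" "t \<le> 1" "orthogonal_matrix x" using t x by auto
  have cu: "continuous_on ({0..} \<times> {x. orthogonal_matrix x}) (\<lambda>(t, x). v t x)"
    using hs unfolding heat_solution_On_def by blast
  have "continuous_on ({0..1} \<times> {x. orthogonal_matrix x})
     (\<lambda>p. (\<lambda>(t, x). v t x) p - (phiF A c (snd p) + fst p * psiF A c (snd p) + CC A * (fst p)^2 + e * (1 + fst p)))"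
    by (intro continuous_intros cont_phi2 cont_psi2 continuous_on_subset[OF cu]) auto
  then show "continuous_on ({0..1} \<times> {x. orthogonal_matrix x})
     (\<lambda>(t, x). v t x - (phiF A c x + t * psiF A c x + CC A * t^2 + e * (1 + t)))"
    by (simp add: case_prod_beta')
  show "v 0 y - (phiF A c y + 0 * psiF A c y + CC A * 0^2 + e * (1 + 0)) < 0" if "orthogonal_matrix y" for y
    using hs that e unfolding heat_solution_On_def phiF_def by simp
  fix s y assume s: "0 < s" "s \<le> 1" and y: "orthogonal_matrix y"
    and mx: "\<forall>w. orthogonal_matrix w \<longrightarrow> v s w - (phiF A c w + s * psiF A c w + CC A * s^2 + e * (1 + s))
       \<le> v s y - (phiF A c y + s * psiF A c y + CC A * s^2 + e * (1 + s))"
  have mx': "\<forall>w. orthogonal_matrix w \<longrightarrow> v s w - (phiF A c w + s * psiF A c w) \<le> v s y - (phiF A c y + s * psiF A c y)"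
    using mx by auto
  have lap: "laplacian_On (v s) y \<le> psiF A c y + s * SD A c y" by (rule lap_upper[OF hs s(1) y mx'])
  have sd: "SD A c y \<le> CC A" using SD_bound[OF y hc] by simp
  have dv: "((\<lambda>s. v s y) has_real_derivative laplacian_On (v s) y) (at s)"
    using hs s y unfolding heat_solution_On_def by blast
  have "((\<lambda>r. v r y - (phiF A c y + r * psiF A c y + CC A * r^2 + e * (1 + r))) has_real_derivative
     laplacian_On (v s) y - (psiF A c y + CC A * (2 * s) + e)) (at s)"
    by (auto intro!: derivative_eq_intros dv)
  moreover have "laplacian_On (v s) y - (psiF A c y + CC A * (2 * s) + e) < 0"
  proof -
    have "s * SD A c y \<le> s * CC A" using sd s by (simp add: mult_left_mono)
    moreover have "0 \<le> s * CC A" using s CC_nonneg[of A] by simp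
    moreover have "CC A * (2 * s) = 2 * (s * CC A)" by simp
    ultimately show ?thesis using lap e by linarith
  qed
  ultimately show "\<exists>D. ((\<lambda>r. v r y - (phiF A c y + r * psiF A c y + CC A * r^2 + e * (1 + r))) has_real_derivative D) (at s) \<and> D < 0"
    by blast
qed

lemma lower_cmp:
  fixes A x :: "real^'n::{finite,linorder}^'n::{finite,linorder}"
  assumes hs: "heat_solution_On (\<lambda>y. (trace (A ** y) - c)^2) v"
    and hc: "\<bar>c\<bar> \<le> real CARD('n) * KA A"
    and t: "0 < t" "t \<le> 1" and x: "orthogonal_matrix x" and e: "e > 0"
  shows "(phiF A c x + t * psiF A c x - CC A * t^2 - e * (1 + t)) - v t x < 0"
proof (rule maxprin[where z = "\<lambda>t x. (phiF A c x + t * psiF A c x - CC A * t^2 - e * (1 + t)) - v t x" and T = 1])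
  show "(0::real) < 1" by simp
  show "0 \<le> t" "t \<le> 1" "orthogonal_matrix x" using t x by auto
  have cu: "continuous_on ({0..} \<times> {x. orthogonal_matrix x}) (\<lambda>(t, x). v t x)"
    using hs unfolding heat_solution_On_def by blast
  have "continuous_on ({0..1} \<times> {x. orthogonal_matrix x})
     (\<lambda>p. (phiF A c (snd p) + fst p * psiF A c (snd p) - CC A * (fst p)^2 - e * (1 + fst p)) - (\<lambda>(t, x). v t x) p)"
    by (intro continuous_intros cont_phi2 cont_psi2 continuous_on_subset[OF cu]) auto
  then show "continuous_on ({0..1} \<times> {x. orthogonal_matrix x})
     (\<lambda>(t, x). (phiF A c x + t * psiF A c x - CC A * t^2 - e * (1 + t)) - v t x)"
    by (simp add: case_prod_beta')
  show "(phiF A c y + 0 * psiF A c y - CC A * 0^2 - e * (1 + 0)) - v 0 y < 0" if "orthogonal_matrix y" for y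
    using hs that e unfolding heat_solution_On_def phiF_def by simp
  fix s y assume s: "0 < s" "s \<le> 1" and y: "orthogonal_matrix y"
    and mx: "\<forall>w. orthogonal_matrix w \<longrightarrow> (phiF A c w + s * psiF A c w - CC A * s^2 - e * (1 + s)) - v s w
       \<le> (phiF A c y + s * psiF A c y - CC A * s^2 - e * (1 + s)) - v s y"
  have mx': "\<forall>w. orthogonal_matrix w \<longrightarrow> (phiF A c w + s * psiF A c w) - v s w \<le> (phiF A c y + s * psiF A c y) - v s y"
    using mx by auto
  have lap: "laplacian_On (v s) y \<ge> psiF A c y + s * SD A c y" by (rule lap_lower[OF hs s(1) y mx'])
  have sd: "SD A c y \<ge> - CC A" using SD_bound[OF y hc] by simp
  have dv: "((\<lambda>s. v s y) has_real_derivative laplacian_On (v s) y) (at s)"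
    using hs s y unfolding heat_solution_On_def by blast
  have "((\<lambda>r. (phiF A c y + r * psiF A c y - CC A * r^2 - e * (1 + r)) - v r y) has_real_derivative
     (psiF A c y - CC A * (2 * s) - e) - laplacian_On (v s) y) (at s)"
    by (auto intro!: derivative_eq_intros dv)
  moreover have "(psiF A c y - CC A * (2 * s) - e) - laplacian_On (v s) y < 0"
  proof -
    have "s * (- CC A) \<le> s * SD A c y" by (rule mult_left_mono[OF sd]) (use s in simp)
    moreover have "0 \<le> s * CC A" using s CC_nonneg[of A] by simp
    moreover have "CC A * (2 * s) = 2 * (s * CC A)" by simp
    ultimately show ?thesis using lap e by linarith
  qed
  ultimately show "\<exists>D. ((\<lambda>r. (phiF A c y + r * psiF A c y - CC A * r^2 - e * (1 + r)) - v r y) has_real_derivative D) (at s) \<and> D < 0"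
    by blast
qed



theorem mainTheorem6:
  fixes A :: "real^'n::{finite,linorder}^'n::{finite,linorder}"
    and u :: "real^'n::{finite,linorder}^'n::{finite,linorder} \<Rightarrow> real \<Rightarrow> real^'n::{finite,linorder}^'n::{finite,linorder} \<Rightarrow> real"
  assumes "CARD('n) \<ge> 2"
    and "trace (A ** transpose A) = real CARD('n)"
    and "\<And>Q. orthogonal_matrix Q \<Longrightarrow>
           heat_solution_On (\<lambda>y. (trace (A ** y) - trace (A ** Q))^2) (u Q)"
  shows "\<exists>C. \<forall>\<^sub>F t in at_right 0. \<forall>Q. orthogonal_matrix Q \<longrightarrow>
           \<bar>u Q t Q - t * (real CARD('n) - trace ((A ** Q) ** (A ** Q)))\<bar> \<le> C * t^2"
proof (intro exI[of _ "CC A"])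
  have main: "\<bar>u Q t Q - t * (real CARD('n) - trace ((A ** Q) ** (A ** Q)))\<bar> \<le> CC A * t^2"
    if t: "0 < t" "t < 1" and Q: "orthogonal_matrix Q" for t Q
  proof -
    define c where "c = trace (A ** Q)"
    have hs: "heat_solution_On (\<lambda>y. (trace (A ** y) - c)^2) (u Q)"
      unfolding c_def by (rule assms(3)[OF Q])
    have hc: "\<bar>c\<bar> \<le> real CARD('n) * KA A"
      unfolding c_def by (rule trace_bound[OF entry_AM[OF Q]])
    have p0: "phiF A c Q = 0" by (simp add: phiF_def c_def)
    have ps: "psiF A c Q = real CARD('n) - trace ((A ** Q) ** (A ** Q))"
      unfolding c_def by (rule psi_at_Q[OF Q assms(2)])
    define w where "w = t * psiF A c Q"
    have up: "u Q t Q \<le> w + CC A * t^2"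
    proof (rule field_le_epsilon)
      fix e :: real assume e: "0 < e"
      have "e / (1 + t) > 0" using e t by simp
      from upper_cmp[OF hs hc t(1) _ Q this] t
      have "u Q t Q < w + CC A * t^2 + e / (1 + t) * (1 + t)" by (simp add: p0 w_def)
      also have "e / (1 + t) * (1 + t) = e" using t by simp
      finally show "u Q t Q \<le> w + CC A * t^2 + e" by simp
    qed
    have lo: "w - CC A * t^2 \<le> u Q t Q"
    proof (rule field_le_epsilon)
      fix e :: real assume e: "0 < e"
      have "e / (1 + t) > 0" using e t by simp
      from lower_cmp[OF hs hc t(1) _ Q this] t
      have "w - CC A * t^2 - e / (1 + t) * (1 + t) < u Q t Q" by (simp add: p0 w_def)
      also have "e / (1 + t) * (1 + t) = e" using t by simp
      finally show "w - CC A * t^2 \<le> u Q t Q + e" by simp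
    qed
    show ?thesis using up lo unfolding w_def ps by (simp add: abs_le_iff)
  qed
  show "\<forall>\<^sub>F t in at_right 0. \<forall>Q. orthogonal_matrix Q \<longrightarrow>
           \<bar>u Q t Q - t * (real CARD('n) - trace ((A ** Q) ** (A ** Q)))\<bar> \<le> CC A * t^2"
    unfolding eventually_at_right_field by (intro exI[of _ 1]) (auto intro: main)
qed

end
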